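(* Let $\lambda$ be a partition of $n$ and let $\lambda(\cdot)$ denote Young's orthogonal representation of $S_n$ on the space with orthonormal basis $\{\ket{T}\}$ indexed by standard Young tableaux $T$ of shape $\lambda$. Let $A=\{a_1,\dots,a_k\}\subseteq\{1,\dots,n\}$ be a set of consecutive integers, let $S_A\le S_n$ be the symmetric group permuting the elements of $A$ (fixing all others), and let $\lambda(S_A)=\sum_{\pi\in S_A}\lambda(\pi)$. If $T$ is a standard Young tableau of shape $\lambda$ containing two elements of $A$ in the same column, then $\lambda(S_A)\ket{T}=0$.
   Context: A standard Young tableau (SYT) of shape $\lambda\vdash n$ is a filling of the Young diagram of $\lambda$ with $1,\dots,n$, each used once, strictly increasing along rows (left to right) and down columns. Young's orthogonal representation is determined by the action of adjacent transpositions $(k,k+1)$ on SYTs: if $k$ and $k+1$ lie in the same row of $T$, then $(k,k+1)\ket{T}=\ket{T}$; if they lie in the same column, $(k,k+1)\ket{T}=-\ket{T}$; otherwise $(k,k+1)\ket{T}=a\ket{T}+\sqrt{1-a^2}\,\ket{(k,k+1)T}$ and $(k,k+1)\ket{(k,k+1)T}=\sqrt{1-a^2}\,\ket{T}-a\ket{(k,k+1)T}$, where $(k,k+1)T$ is the SYT obtained from $T$ by swapping the entries $k$ and $k+1$, and $a$ is the reciprocal of the axial distance in $T$ between the box containing $k$ and the box containing $k+1$ (the signed number of steps: up steps plus right steps minus left steps minus down steps, from the box of $k$ to the box of $k+1$). *)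

theory Defs
  imports Complex_Main "HOL-Combinatorics.Combinatorics"
begin

text \<open>A partition of n: a weakly decreasing list of positive naturals summing to n.
  Boxes of the Young diagram are pairs (row, column), 0-indexed, row 0 on top.\<close>

definition is_partition :: "nat list \<Rightarrow> nat \<Rightarrow> bool" where
  "is_partition lam n \<longleftrightarrow> sorted (rev lam) \<and> 0 \<notin> set lam \<and> sum_list lam = n"

definition diagram :: "nat list \<Rightarrow> (nat \<times> nat) set" where
  "diagram lam = {(i, j). i < length lam \<and> j < lam ! i}"

type_synonym tableau = "nat \<times> nat \<Rightarrow> nat"

text \<open>Standard Young tableau of shape lam: a bijection from the diagram onto
  {1..n}, strictly increasing along rows and down columns; value 0 outside the diagram
  (normalisation so that tableaux are uniquely represented).\<close>

definition is_syt :: "nat list \<Rightarrow> tableau \<Rightarrow> bool" where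
  "is_syt lam T \<longleftrightarrow>
     bij_betw T (diagram lam) {1..sum_list lam} \<and>
     (\<forall>b. b \<notin> diagram lam \<longrightarrow> T b = 0) \<and>
     (\<forall>i j j'. (i, j') \<in> diagram lam \<longrightarrow> j < j' \<longrightarrow> T (i, j) < T (i, j')) \<and>
     (\<forall>i i' j. (i', j) \<in> diagram lam \<longrightarrow> i < i' \<longrightarrow> T (i, j) < T (i', j))"

definition syt :: "nat list \<Rightarrow> tableau set" where
  "syt lam = {T. is_syt lam T}"

definition box :: "nat list \<Rightarrow> tableau \<Rightarrow> nat \<Rightarrow> nat \<times> nat" where
  "box lam T x = (THE b. b \<in> diagram lam \<and> T b = x)"

definition swap_entries :: "nat \<Rightarrow> tableau \<Rightarrow> tableau" where
  "swap_entries k T = transpose k (k + 1) \<circ> T"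

definition ket :: "tableau \<Rightarrow> tableau \<Rightarrow> real" where
  "ket T = (\<lambda>U. if U = T then 1 else 0)"

definition axial_dist :: "nat list \<Rightarrow> tableau \<Rightarrow> nat \<Rightarrow> int" where
  "axial_dist lam T k =
     (let (r1, c1) = box lam T k; (r2, c2) = box lam T (k + 1)
      in (int c2 - int c1) + (int r1 - int r2))"

text \<open>Action of the adjacent transposition (k,k+1) on the basis vector |T>.
  (The rule for |(k,k+1)T> is the same rule applied to (k,k+1)T, whose axial
  distance is the negative of that of T.)\<close>
definition adj_basis :: "nat list \<Rightarrow> nat \<Rightarrow> tableau \<Rightarrow> (tableau \<Rightarrow> real)" where
  "adj_basis lam k T =
     (let (r1, c1) = box lam T k; (r2, c2) = box lam T (k + 1) in
      if r1 = r2 then ket T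
      else if c1 = c2 then (\<lambda>U. - ket T U)
      else (let a = 1 / real_of_int (axial_dist lam T k) in
            (\<lambda>U. a * ket T U + sqrt (1 - a\<^sup>2) * ket (swap_entries k T) U)))"

definition adj_op :: "nat list \<Rightarrow> nat \<Rightarrow> (tableau \<Rightarrow> real) \<Rightarrow> (tableau \<Rightarrow> real)" where
  "adj_op lam k v = (\<lambda>U. \<Sum>T\<in>syt lam. v T * adj_basis lam k T U)"

definition rep_space :: "nat list \<Rightarrow> (tableau \<Rightarrow> real) set" where
  "rep_space lam = {v. \<forall>U. U \<notin> syt lam \<longrightarrow> v U = 0}"

text \<open>rho is Young's orthogonal representation of S_n (n = |lam|): a homomorphism from
  the permutations of {1..n} to operators on the representation space, acting on
  adjacent transpositions by the rules above (this determines it uniquely).\<close>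
definition young_orth_rep ::
  "nat list \<Rightarrow> ((nat \<Rightarrow> nat) \<Rightarrow> (tableau \<Rightarrow> real) \<Rightarrow> (tableau \<Rightarrow> real)) \<Rightarrow> bool" where
  "young_orth_rep lam rho \<longleftrightarrow>
     (\<forall>\<sigma> \<tau> v. \<sigma> permutes {1..sum_list lam} \<longrightarrow> \<tau> permutes {1..sum_list lam} \<longrightarrow>
        v \<in> rep_space lam \<longrightarrow> rho (\<sigma> \<circ> \<tau>) v = rho \<sigma> (rho \<tau> v)) \<and>
     (\<forall>k v. 1 \<le> k \<longrightarrow> k < sum_list lam \<longrightarrow> v \<in> rep_space lam \<longrightarrow>
        rho (transpose k (k + 1)) v = adj_op lam k v)"

end

theory Submission
  imports Defs
begin

lemma syt_finite: "finite (syt lam)"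
proof -
  have fd: "finite (diagram lam)"
  proof (rule finite_subset)
    show "diagram lam \<subseteq> {..<length lam} \<times> {..<sum_list lam}"
      using elem_le_sum_list by (fastforce simp: diagram_def)
  qed auto
  have "syt lam \<subseteq> {f. \<forall>x. (x \<in> diagram lam \<longrightarrow> f x \<in> {1..sum_list lam}) \<and> (x \<notin> diagram lam \<longrightarrow> f x = 0)}"
    by (auto simp: syt_def is_syt_def bij_betw_def)
  moreover have "finite {f. \<forall>x. (x \<in> diagram lam \<longrightarrow> f x \<in> {1..sum_list lam}) \<and> (x \<notin> diagram lam \<longrightarrow> f x = (0::nat))}"
    by (rule finite_set_of_finite_funs) (use fd in auto)
  ultimately show ?thesis by (rule finite_subset)
qed

lemma syt_box:
  assumes "is_syt lam U" "b \<in> diagram lam"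
  shows "box lam U (U b) = b"
  unfolding box_def
proof (rule the_equality)
  show "b \<in> diagram lam \<and> U b = U b" using assms(2) by simp
  fix b' assume "b' \<in> diagram lam \<and> U b' = U b"
  then show "b' = b" using assms unfolding is_syt_def bij_betw_def inj_on_def by blast
qed

lemma syt_box_in:
  assumes "is_syt lam U" "x \<in> {1..sum_list lam}"
  shows "box lam U x \<in> diagram lam \<and> U (box lam U x) = x"
proof -
  obtain b where "b \<in> diagram lam" "U b = x"
    using assms unfolding is_syt_def bij_betw_def by (metis imageE)
  then show ?thesis using syt_box[OF assms(1)] by metis
qed

lemma transp_less:
  fixes p q k :: nat
  assumes "p < q" "\<not> (p = k \<and> q = k + 1)"
  shows "transpose k (k+1) p < transpose k (k+1) q"
  using assms by (auto simp: transpose_def)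

lemma swap_syt:
  assumes U: "is_syt lam U" and k: "1 \<le> k" "k < sum_list lam"
    and r: "fst (box lam U k) \<noteq> fst (box lam U (k+1))"
    and c: "snd (box lam U k) \<noteq> snd (box lam U (k+1))"
  shows "is_syt lam (swap_entries k U)"
proof -
  let ?t = "transpose k (k+1)"
  have bij: "bij_betw U (diagram lam) {1..sum_list lam}" using U by (simp add: is_syt_def)
  have tp: "?t permutes {1..sum_list lam}" using k by (intro permutes_swap_id) auto
  have b1: "bij_betw (?t \<circ> U) (diagram lam) {1..sum_list lam}"
    by (rule bij_betw_trans[OF bij]) (use tp permutes_imp_bij in blast)
  have z: "\<forall>b. b \<notin> diagram lam \<longrightarrow> (?t \<circ> U) b = 0"
    using U k by (auto simp: is_syt_def transpose_def)
  have bk: "U (i, j) = k \<Longrightarrow> (i,j) \<in> diagram lam \<Longrightarrow> box lam U k = (i,j)" for i j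
    using syt_box[OF U] by metis
  have bk1: "U (i, j) = k+1 \<Longrightarrow> (i,j) \<in> diagram lam \<Longrightarrow> box lam U (k+1) = (i,j)" for i j
    using syt_box[OF U] by metis
  have rows: "\<forall>i j j'. (i, j') \<in> diagram lam \<longrightarrow> j < j' \<longrightarrow> (?t \<circ> U) (i, j) < (?t \<circ> U) (i, j')"
  proof (intro allI impI)
    fix i j j' assume d: "(i, j') \<in> diagram lam" and jj: "j < j'"
    have d2: "U (i,j) = k \<Longrightarrow> (i,j) \<in> diagram lam" using U k(1) unfolding is_syt_def by force
    have lt: "U (i,j) < U (i,j')" using U d jj by (auto simp: is_syt_def)
    have "\<not> (U (i,j) = k \<and> U (i,j') = k+1)"
      using bk bk1 d d2 r by fastforce
    then show "(?t \<circ> U) (i, j) < (?t \<circ> U) (i, j')" using transp_less[OF lt] by simp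
  qed
  have cols: "\<forall>i i' j. (i', j) \<in> diagram lam \<longrightarrow> i < i' \<longrightarrow> (?t \<circ> U) (i, j) < (?t \<circ> U) (i', j)"
  proof (intro allI impI)
    fix i i' j assume d: "(i', j) \<in> diagram lam" and jj: "i < i'"
    have d2: "U (i,j) = k \<Longrightarrow> (i,j) \<in> diagram lam" using U k(1) unfolding is_syt_def by force
    have lt: "U (i,j) < U (i',j)" using U d jj by (auto simp: is_syt_def)
    have "\<not> (U (i,j) = k \<and> U (i',j) = k+1)"
      using bk bk1 d d2 c by fastforce
    then show "(?t \<circ> U) (i, j) < (?t \<circ> U) (i', j)" using transp_less[OF lt] by simp
  qed
  show ?thesis unfolding is_syt_def swap_entries_def using b1 z rows cols by blast
qed

lemma adj_op_ket:
  assumes "U \<in> syt lam"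
  shows "adj_op lam k (ket U) = adj_basis lam k U"
proof
  fix X
  have "adj_op lam k (ket U) X = (\<Sum>T\<in>syt lam. if T = U then adj_basis lam k T X else 0)"
    unfolding adj_op_def ket_def by (intro sum.cong) auto
  also have "\<dots> = adj_basis lam k U X" using assms syt_finite by (simp add: sum.delta')
  finally show "adj_op lam k (ket U) X = adj_basis lam k U X" .
qed

lemma adj_op_lin:
  "adj_op lam k (\<lambda>X. a * v X + c * w X) = (\<lambda>X. a * adj_op lam k v X + c * adj_op lam k w X)"
  unfolding adj_op_def by (auto simp: sum_distrib_left sum.distrib algebra_simps intro!: sum.cong)

lemma adj_basis_out:
  assumes T: "T \<in> syt lam" and U: "U \<notin> syt lam" and k: "1 \<le> k" "k < sum_list lam"
  shows "adj_basis lam k T U = 0"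
proof -
  obtain r1 c1 where b1: "box lam T k = (r1, c1)" by fastforce
  obtain r2 c2 where b2: "box lam T (k+1) = (r2, c2)" by fastforce
  have ne: "U \<noteq> T" using T U by auto
  have "r1 \<noteq> r2 \<Longrightarrow> c1 \<noteq> c2 \<Longrightarrow> swap_entries k T \<in> syt lam"
    using swap_syt[of lam T k] T k b1 b2 by (auto simp: syt_def)
  then have "r1 \<noteq> r2 \<Longrightarrow> c1 \<noteq> c2 \<Longrightarrow> U \<noteq> swap_entries k T" using U by auto
  then show ?thesis using ne unfolding adj_basis_def b1 b2 Let_def ket_def by auto
qed

lemma adj_op_rep:
  assumes "1 \<le> k" "k < sum_list lam"
  shows "adj_op lam k v \<in> rep_space lam"
  unfolding rep_space_def adj_op_def using adj_basis_out[OF _ _ assms] by auto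

definition good :: "nat list \<Rightarrow> ((nat \<Rightarrow> nat) \<Rightarrow> (tableau \<Rightarrow> real) \<Rightarrow> (tableau \<Rightarrow> real)) \<Rightarrow> (nat \<Rightarrow> nat) \<Rightarrow> bool" where
  "good lam rho s \<longleftrightarrow> (\<forall>v \<in> rep_space lam. rho s v \<in> rep_space lam) \<and>
     (\<forall>v w a c. v \<in> rep_space lam \<longrightarrow> w \<in> rep_space lam \<longrightarrow>
        rho s (\<lambda>X. a * v X + c * w X) = (\<lambda>X. a * rho s v X + c * rho s w X))"

lemma rep_lin: "v \<in> rep_space lam \<Longrightarrow> w \<in> rep_space lam \<Longrightarrow> (\<lambda>X. a * v X + c * w X) \<in> rep_space lam"
  by (auto simp: rep_space_def)

lemma good_adj:
  assumes "young_orth_rep lam rho" "1 \<le> k" "k < sum_list lam"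
  shows "good lam rho (transpose k (k+1))"
  using assms adj_op_rep[OF assms(2,3)] adj_op_lin rep_lin
  unfolding good_def young_orth_rep_def by simp

lemma good_comp:
  assumes "young_orth_rep lam rho" "s permutes {1..sum_list lam}" "t permutes {1..sum_list lam}"
    "good lam rho s" "good lam rho t"
  shows "good lam rho (s \<circ> t)"
proof -
  have h: "v \<in> rep_space lam \<Longrightarrow> rho (s \<circ> t) v = rho s (rho t v)" for v
    using assms(1-3) unfolding young_orth_rep_def by blast
  show ?thesis using assms(4,5) rep_lin unfolding good_def by (simp add: h)
qed

lemma good_id:
  assumes "young_orth_rep lam rho" "2 \<le> sum_list lam"
  shows "good lam rho id"
proof -
  have p: "transpose 1 (1+1) permutes {1..sum_list lam}" using assms by (intro permutes_swap_id) auto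
  have "good lam rho (transpose 1 (1+1) \<circ> transpose 1 (1+1))"
    using good_comp[OF assms(1) p p] good_adj[OF assms(1), of 1] assms(2) by simp
  then show ?thesis by simp
qed

lemma good_transp:
  assumes "young_orth_rep lam rho" "1 \<le> a" "a < b" "b \<le> sum_list lam"
  shows "good lam rho (transpose a b)"
proof -
  have "Suc a \<le> b" using assms by simp
  then show ?thesis using assms(4)
  proof (induction b rule: dec_induct)
    case base
    then show ?case using good_adj[OF assms(1,2)] by simp
  next
    case (step m)
    have eq: "transpose a (Suc m) = transpose m (m+1) \<circ> transpose a m \<circ> transpose m (m+1)"
      using step.hyps by (auto simp: transpose_def)
    have p1: "transpose m (m+1) permutes {1..sum_list lam}" using step assms by (intro permutes_swap_id) auto
    have p2: "transpose a m permutes {1..sum_list lam}" using step assms by (intro permutes_swap_id) auto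
    have g1: "good lam rho (transpose m (m+1))" using good_adj[OF assms(1)] step assms by simp
    have g2: "good lam rho (transpose a m)" using step by simp
    show ?case unfolding eq
      by (intro good_comp[OF assms(1)] permutes_compose p1 p2 g1 g2)
  qed
qed

lemma good_all:
  assumes "young_orth_rep lam rho" "2 \<le> sum_list lam" "s permutes {1..sum_list lam}"
  shows "good lam rho s"
  using assms(3) finite_atLeastAtMost
proof (induction rule: permutes_induct)
  case id
  show ?case using good_id[OF assms(1,2)] by (simp add: id_def)
next
  case (swap a b p)
  have g: "good lam rho (transpose a b)"
  proof (cases "a < b")
    case True
    then show ?thesis using good_transp[OF assms(1)] swap by auto
  next
    case False
    then have "b < a" using swap by simp
    then show ?thesis using good_transp[OF assms(1), of b a] swap by (auto simp: transpose_commute)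
  qed
  show ?case by (rule good_comp[OF assms(1)]) (use swap g in \<open>auto intro: permutes_swap_id\<close>)
qed

definition Pop :: "nat set \<Rightarrow> ((nat \<Rightarrow> nat) \<Rightarrow> (tableau \<Rightarrow> real) \<Rightarrow> (tableau \<Rightarrow> real)) \<Rightarrow> (tableau \<Rightarrow> real) \<Rightarrow> tableau \<Rightarrow> real" where
  "Pop A rho v X = (\<Sum>\<pi> \<in> {\<pi>. \<pi> permutes A}. rho \<pi> v X)"

lemma ket_rep: "U \<in> syt lam \<Longrightarrow> ket U \<in> rep_space lam"
  by (auto simp: rep_space_def ket_def)

lemma P_inv:
  assumes Y: "young_orth_rep lam rho" and AS: "A \<subseteq> {1..sum_list lam}"
    and w: "w \<in> A" "w + 1 \<in> A" and v: "v \<in> rep_space lam"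
  shows "Pop A rho (adj_op lam w v) X = Pop A rho v X"
proof -
  let ?s = "transpose w (w+1)"
  have w1: "1 \<le> w" "w < sum_list lam" using w AS by auto
  have sA: "?s permutes A" using w by (intro permutes_swap_id)
  have sN: "?s permutes {1..sum_list lam}" using permutes_subset[OF sA AS] .
  have eq: "rho \<pi> (adj_op lam w v) = rho (\<pi> \<circ> ?s) v" if "\<pi> permutes A" for \<pi>
  proof -
    have pN: "\<pi> permutes {1..sum_list lam}" using permutes_subset[OF that AS] .
    have "adj_op lam w v = rho ?s v" using Y w1 v unfolding young_orth_rep_def by simp
    then show ?thesis using Y pN sN v unfolding young_orth_rep_def by simp
  qed
  have "Pop A rho (adj_op lam w v) X = (\<Sum>\<pi> \<in> {\<pi>. \<pi> permutes A}. rho (\<pi> \<circ> ?s) v X)"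
    unfolding Pop_def using eq by (intro sum.cong) auto
  also have "\<dots> = Pop A rho v X" unfolding Pop_def
    by (rule sum.reindex_bij_witness[where i="\<lambda>\<pi>. \<pi> \<circ> ?s" and j="\<lambda>\<pi>. \<pi> \<circ> ?s"])
       (auto simp: comp_assoc intro: permutes_compose[OF sA[simplified]])
  finally show ?thesis .
qed

lemma P_lin:
  assumes Y: "young_orth_rep lam rho" and N2: "2 \<le> sum_list lam" and AS: "A \<subseteq> {1..sum_list lam}"
    and v: "v \<in> rep_space lam" and w: "w \<in> rep_space lam"
  shows "Pop A rho (\<lambda>X. a * v X + c * w X) Y = a * Pop A rho v Y + c * Pop A rho w Y"
proof -
  have "rho \<pi> (\<lambda>X. a * v X + c * w X) = (\<lambda>X. a * rho \<pi> v X + c * rho \<pi> w X)" if "\<pi> permutes A" for \<pi>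
    using good_all[OF Y N2 permutes_subset[OF that AS]] v w unfolding good_def by blast
  then show ?thesis unfolding Pop_def by (simp add: sum.distrib sum_distrib_left)
qed

lemma finite_diagram: "finite (diagram lam)"
proof (rule finite_subset)
  show "diagram lam \<subseteq> {..<length lam} \<times> {..<sum_list lam}"
    using elem_le_sum_list by (fastforce simp: diagram_def)
qed auto

lemma syt_row: "is_syt lam U \<Longrightarrow> (i, j') \<in> diagram lam \<Longrightarrow> j < j' \<Longrightarrow> U (i, j) < U (i, j')"
  by (simp add: is_syt_def)
lemma syt_col: "is_syt lam U \<Longrightarrow> (i', j) \<in> diagram lam \<Longrightarrow> i < i' \<Longrightarrow> U (i, j) < U (i', j)"
  by (simp add: is_syt_def)
lemma syt_range: "is_syt lam U \<Longrightarrow> b \<in> diagram lam \<Longrightarrow> U b \<in> {1..sum_list lam}"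
  by (auto simp: is_syt_def bij_betw_def)
lemma syt_nz: "is_syt lam U \<Longrightarrow> U b \<noteq> 0 \<Longrightarrow> b \<in> diagram lam"
  unfolding is_syt_def by (metis prod.collapse)

lemma main:
  assumes Y: "young_orth_rep lam rho" and N2: "2 \<le> sum_list lam" and AS: "A \<subseteq> {1..sum_list lam}"
    and Aint: "A = {a0..b0}" and Dij: "(Suc i, j) \<in> diagram lam"
  shows "\<forall>U. is_syt lam U \<longrightarrow> U (i,j) \<in> A \<longrightarrow> U (Suc i, j) \<in> A \<longrightarrow> (\<forall>X. Pop A rho (ket U) X = 0)"
proof -
  define N where "N = sum_list lam"
  define R where "R = {b \<in> diagram lam. fst b \<le> i \<and> j \<le> snd b}"
  define mu where "mu = (\<lambda>U::tableau. \<Sum>b\<in>R. U b)"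
  define K where "K = card R * N + 1"
  have finR: "finite R" unfolding R_def using finite_diagram by auto
  have bound: "mu U < K" if "is_syt lam U" for U
  proof -
    have "mu U \<le> card R * N" unfolding mu_def
      using sum_bounded_above[of R U N] syt_range[OF that] unfolding R_def N_def by fastforce
    then show ?thesis unfolding K_def by simp
  qed
  have "\<forall>U. K - mu U = m \<longrightarrow> is_syt lam U \<longrightarrow> U (i,j) \<in> A \<longrightarrow> U (Suc i, j) \<in> A \<longrightarrow> (\<forall>X. Pop A rho (ket U) X = 0)" for m
  proof (induction m rule: less_induct)
    case (less m)
    show ?case
    proof (intro allI impI)
      fix U X
      assume m: "K - mu U = m" and U: "is_syt lam U" and xA: "U (i,j) \<in> A" and yA: "U (Suc i, j) \<in> A"
      define x where "x = U (i,j)"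
      define y where "y = U (Suc i,j)"
      have xy: "x < y" unfolding x_def y_def using syt_col[OF U Dij] by simp
      have x1: "1 \<le> x" and yN: "y \<le> N" using xA yA AS unfolding x_def y_def N_def by auto
      have Dij0: "(i,j) \<in> diagram lam" using syt_nz[OF U] x1 unfolding x_def by simp
      have bx: "box lam U x = (i,j)" unfolding x_def using syt_box[OF U Dij0] .
      have by': "box lam U y = (Suc i,j)" unfolding y_def using syt_box[OF U Dij] .
      have Us: "U \<in> syt lam" using U by (simp add: syt_def)
      have kr: "ket U \<in> rep_space lam" using ket_rep[OF Us] .
      have key: "Pop A rho (ket U) X = Pop A rho (adj_basis lam w U) X" if "w \<in> A" "w + 1 \<in> A" for w
        using P_inv[OF Y AS that kr, of X] adj_op_ket[OF Us] by simp
      have inA: "v \<in> A" if "x \<le> v" "v \<le> y" for v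
        using that xA yA Aint unfolding x_def y_def by auto
      show "Pop A rho (ket U) X = 0"
      proof (cases "y = x + 1")
        case True
        have "adj_basis lam x U = (\<lambda>X. (-1) * ket U X + 0 * ket U X)"
          unfolding adj_basis_def using bx by' True by simp
        then have "Pop A rho (ket U) X = - Pop A rho (ket U) X"
          using key[of x] inA[of x] inA[of "x+1"] xy True P_lin[OF Y N2 AS kr kr, of "-1" 0 X] by simp
        then show ?thesis by simp
      next
        case False
        then have xy2: "x + 1 < y" using xy by simp
        have region: "(fst (box lam U v) \<le> i \<longrightarrow> j \<le> snd (box lam U v)) \<and>
                      (i < fst (box lam U v) \<longrightarrow> snd (box lam U v) \<le> j)" if "x \<le> v" "v \<le> y" for v
        proof -
          obtain r c where rc: "box lam U v = (r, c)" by fastforce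
          have vN: "v \<in> {1..sum_list lam}" using that x1 yN unfolding N_def by auto
          have D: "(r,c) \<in> diagram lam" and Uv: "U (r,c) = v" using syt_box_in[OF U vN] rc by auto
          have 1: "j \<le> c" if "r \<le> i"
          proof (rule ccontr)
            assume "\<not> j \<le> c"
            then have cj: "c < j" by simp
            have Dic: "(i,c) \<in> diagram lam" using Dij0 cj by (auto simp: diagram_def)
            have "U (i,c) < x" using syt_row[OF U Dij0 cj] unfolding x_def .
            moreover have "U (r,c) \<le> U (i,c)" using syt_col[OF U Dic, of r] \<open>r \<le> i\<close>
              by (cases "r = i") auto
            ultimately show False using Uv \<open>x \<le> v\<close> by simp
          qed
          have 2: "c \<le> j" if "i < r"
          proof (rule ccontr)
            assume "\<not> c \<le> j"
            then have cj: "j < c" by simp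
            have Drj: "(r,j) \<in> diagram lam" using D cj by (auto simp: diagram_def)
            have "U (r,j) < U (r,c)" using syt_row[OF U D cj] .
            moreover have "y \<le> U (r,j)" using syt_col[OF U Drj, of "Suc i"] \<open>i < r\<close> unfolding y_def
              by (cases "r = Suc i") auto
            ultimately show False using Uv \<open>v \<le> y\<close> by simp
          qed
          show ?thesis using 1 2 rc by simp
        qed
        define W where "W = {v. x \<le> v \<and> v < y \<and> box lam U v \<in> R}"
        have finW: "finite W" unfolding W_def by (rule finite_subset[of _ "{..<y}"]) auto
        have xW: "x \<in> W" unfolding W_def R_def using xy bx Dij0 by simp
        define w where "w = Max W"
        have wW: "w \<in> W" unfolding w_def using finW xW Max_in by blast
        then have xw: "x \<le> w" and wy: "w < y" and bwR: "box lam U w \<in> R" unfolding W_def by auto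
        obtain r1 c1 where b1: "box lam U w = (r1, c1)" by fastforce
        obtain r2 c2 where b2: "box lam U (w+1) = (r2, c2)" by fastforce
        have r1: "r1 \<le> i" and c1: "j \<le> c1" using bwR b1 unfolding R_def by auto
        have w1N: "w + 1 \<in> {1..sum_list lam}" using wy yN unfolding N_def by auto
        have wN: "w \<in> {1..sum_list lam}" using x1 xw wy yN unfolding N_def by auto
        have D1: "(r1,c1) \<in> diagram lam" and U1: "U (r1,c1) = w" using syt_box_in[OF U wN] b1 by auto
        have D2: "(r2,c2) \<in> diagram lam" and U2: "U (r2,c2) = w + 1" using syt_box_in[OF U w1N] b2 by auto
        have r2c2: "i < r2 \<and> c2 \<le> j"
        proof (cases "w + 1 = y")
          case True
          then show ?thesis using b2 by' by simp
        next
          case False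
          then have "w + 1 < y" using wy by simp
          moreover have "\<not> w + 1 \<le> w" by simp
          ultimately have "w + 1 \<notin> W" using Max_ge[OF finW] unfolding w_def[symmetric] using xw
            by (metis (mono_tags, lifting) W_def le_SucI mem_Collect_eq not_less_eq_eq Suc_eq_plus1)
          then have "box lam U (w+1) \<notin> R" using xw \<open>w + 1 < y\<close> unfolding W_def by simp
          then have "\<not> (r2 \<le> i \<and> j \<le> c2)" using b2 D2 unfolding R_def by auto
          moreover have "(r2 \<le> i \<longrightarrow> j \<le> c2) \<and> (i < r2 \<longrightarrow> c2 \<le> j)"
            using region[of "w+1"] xw \<open>w + 1 < y\<close> b2 by simp
          ultimately show ?thesis by auto
        qed
        have c12: "c2 < c1"
        proof (rule ccontr)
          assume "\<not> c2 < c1"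
          then have cc: "c1 = j" "c2 = j" using c1 r2c2 by auto
          have "r1 = i"
          proof (rule ccontr)
            assume "r1 \<noteq> i"
            then have "r1 < i" using r1 by simp
            then have "U (r1, j) < x" using syt_col[OF U Dij0] unfolding x_def by simp
            then show False using U1 cc xw by simp
          qed
          then have wx: "w = x" using U1 cc unfolding x_def by simp
          have "r2 = Suc i"
          proof (rule ccontr)
            assume "r2 \<noteq> Suc i"
            then have "Suc i < r2" using r2c2 by simp
            then have "y < U (r2, j)" using syt_col[OF U, of r2 j "Suc i"] D2 cc unfolding y_def by simp
            then show False using U2 cc wy by simp
          qed
          then have "w + 1 = y" using U2 cc unfolding y_def by simp
          then show False using wx xy2 by simp
        qed
        have rr: "r1 < r2" using r1 r2c2 by simp
        have ad: "axial_dist lam U w = (int c2 - int c1) + (int r1 - int r2)"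
          unfolding axial_dist_def using b1 b2 by simp
        have adl: "axial_dist lam U w \<le> -2" using ad c12 rr by simp
        define a where "a = 1 / real_of_int (axial_dist lam U w)"
        have aneg: "a < 0" unfolding a_def using adl by simp
        define U' where "U' = swap_entries w U"
        have basis: "adj_basis lam w U = (\<lambda>X. a * ket U X + sqrt (1 - a\<^sup>2) * ket U' X)"
          unfolding adj_basis_def a_def U'_def using b1 b2 rr c12 by (simp add: Let_def)
        have wA: "w \<in> A" "w + 1 \<in> A" using inA xw wy by auto
        have U'syt: "is_syt lam U'" unfolding U'_def
          using swap_syt[OF U, of w] x1 xw wy yN b1 b2 rr c12 unfolding N_def by simp
        have tA: "transpose w (w+1) z \<in> A" if "z \<in> A" for z
          using that wA by (auto simp: transpose_def)
        have U'A: "U' (i,j) \<in> A" "U' (Suc i, j) \<in> A"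
          unfolding U'_def swap_entries_def using tA xA yA by auto
        have muU: "mu U = w + (\<Sum>b\<in>R - {(r1,c1)}. U b)"
          unfolding mu_def using sum.remove[OF finR, of "(r1,c1)" U] bwR b1 U1 by simp
        have same: "U' b = U b" if "b \<in> R - {(r1,c1)}" for b
        proof -
          have bD: "b \<in> diagram lam" using that unfolding R_def by auto
          have "U b \<noteq> w" using syt_box[OF U bD] b1 that by auto
          moreover have "U b \<noteq> w + 1"
          proof
            assume "U b = w + 1"
            then have "b = (r2,c2)" using syt_box[OF U bD] b2 by metis
            then show False using that r2c2 unfolding R_def by auto
          qed
          ultimately show ?thesis unfolding U'_def swap_entries_def by (simp add: transpose_def)
        qed
        have muU': "mu U' = (w + 1) + (\<Sum>b\<in>R - {(r1,c1)}. U b)"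
        proof -
          have "mu U' = U' (r1,c1) + (\<Sum>b\<in>R - {(r1,c1)}. U' b)"
            unfolding mu_def using sum.remove[OF finR, of "(r1,c1)" U'] bwR b1 by simp
          moreover have "U' (r1,c1) = w + 1" unfolding U'_def swap_entries_def using U1 by simp
          moreover have "(\<Sum>b\<in>R - {(r1,c1)}. U' b) = (\<Sum>b\<in>R - {(r1,c1)}. U b)"
            using same by (rule sum.cong[OF refl])
          ultimately show ?thesis by simp
        qed
        have "K - mu U' < m" using m muU muU' bound[OF U'syt] by simp
        then have IH: "Pop A rho (ket U') X = 0"
          using less.IH U'syt U'A by blast
        have U's: "U' \<in> syt lam" using U'syt by (simp add: syt_def)
        have "Pop A rho (ket U) X = a * Pop A rho (ket U) X + sqrt (1 - a\<^sup>2) * Pop A rho (ket U') X"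
          using key[OF wA] basis P_lin[OF Y N2 AS kr ket_rep[OF U's]] by simp
        then have "(1 - a) * Pop A rho (ket U) X = 0" using IH by (simp add: algebra_simps)
        then show ?thesis using aneg by simp
      qed
    qed
  qed
  then show ?thesis by blast
qed

lemma final_aux:
  assumes P: "is_partition lam n" and Y: "young_orth_rep lam rho" and AS: "A \<subseteq> {1..n}"
    and Aint: "A = {a0..b0}" and T: "T \<in> syt lam"
    and D1: "(i, j) \<in> diagram lam" and D2: "(i', j) \<in> diagram lam" and ii: "i < i'"
    and A1: "T (i, j) \<in> A" and A2: "T (i', j) \<in> A"
  shows "\<forall>U. (\<Sum>\<pi> \<in> {\<pi>. \<pi> permutes A}. rho \<pi> (ket T) U) = 0"
proof -
  have n: "n = sum_list lam" and srt: "sorted (rev lam)" using P by (auto simp: is_partition_def)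
  have Ts: "is_syt lam T" using T by (simp add: syt_def)
  have "lam ! i' \<le> lam ! Suc i" using sorted_rev_nth_mono[OF srt, of "Suc i" i'] ii D2
    by (auto simp: diagram_def)
  then have Ds: "(Suc i, j) \<in> diagram lam" using D2 ii by (auto simp: diagram_def)
  have l1: "T (i,j) < T (Suc i, j)" using syt_col[OF Ts Ds] by simp
  have l2: "T (Suc i, j) \<le> T (i', j)" using syt_col[OF Ts D2, of "Suc i"] ii
    by (cases "Suc i = i'") auto
  have sA: "T (Suc i, j) \<in> A" using A1 A2 l1 l2 Aint by auto
  have b1: "1 \<le> T (i,j)" "T (i',j) \<le> sum_list lam" using A1 A2 AS n by auto
  have N2: "2 \<le> sum_list lam" using b1 l1 l2 by linarith
  have "\<forall>X. Pop A rho (ket T) X = 0"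
    using main[OF Y N2 _ Aint Ds] AS n Ts A1 sA by auto
  then show ?thesis unfolding Pop_def by blast
qed

theorem lemma1:
  fixes lam :: "nat list" and n :: nat and A :: "nat set" and T :: tableau
    and rho :: "(nat \<Rightarrow> nat) \<Rightarrow> (tableau \<Rightarrow> real) \<Rightarrow> (tableau \<Rightarrow> real)"
  assumes "is_partition lam n"
    and "young_orth_rep lam rho"
    and "A \<subseteq> {1..n}"
    and "\<exists>a b. A = {a..b}"
    and "T \<in> syt lam"
    and "\<exists>i i' j. (i, j) \<in> diagram lam \<and> (i', j) \<in> diagram lam \<and> i \<noteq> i'
                 \<and> T (i, j) \<in> A \<and> T (i', j) \<in> A"
  shows "\<forall>U. (\<Sum>\<pi> \<in> {\<pi>. \<pi> permutes A}. rho \<pi> (ket T) U) = 0"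
proof -
  obtain a0 b0 where Aint: "A = {a0..b0}" using assms(4) by blast
  obtain i i' j where h: "(i, j) \<in> diagram lam" "(i', j) \<in> diagram lam" "i \<noteq> i'"
    "T (i, j) \<in> A" "T (i', j) \<in> A" using assms(6) by blast
  show ?thesis
  proof (cases "i < i'")
    case True
    then show ?thesis using final_aux[OF assms(1-3) Aint assms(5) h(1,2) True h(4,5)] by blast
  next
    case False
    then have "i' < i" using h(3) by simp
    then show ?thesis using final_aux[OF assms(1-3) Aint assms(5) h(2,1) _ h(5,4)] by blast
  qed
qed

end
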